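(* Let $X$ be a Banach space. (1) If $J\subset Y\subset X$ are closed subspaces and $(X,J)$ has the CQLP, then $(Y,J)$ has the CQLP. (2) If $J\subset X$ is a closed subspace such that $X/J$ is reflexive and $(X,J)$ has the CQLP, then $(X^{**},J^{\perp\perp})$ has the CQLP. (3) If $J\subset X$ is a closed reflexive subspace and $(X^{**},J)$ has the CQLP (with $X$ and $J$ viewed inside $X^{**}$ via the canonical embedding), then $(X,J)$ has the CQLP.
   Context: For a closed subspace $J$ of a Banach space $X$ with quotient map $\pi:X\to X/J$, the pair $(X,J)$ has the compact quotient lifting property (CQLP) if for every Banach space $Z$ and every compact linear operator $T:Z\to X/J$ there is a compact linear operator $S:Z\to X$ with $\pi\circ S=T$ and $\|S\|=\|T\|$. $J^{\perp\perp}\subset X^{**}$ is the bi-annihilator of $J$; $(X/J)^{**}$ is identified with $X^{**}/J^{\perp\perp}$. *)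

theory Defs
  imports "HOL-Analysis.Analysis"
begin

definition compact_op :: "('z::real_normed_vector \<Rightarrow> 'y::real_normed_vector) \<Rightarrow> bool" where
  "compact_op T \<longleftrightarrow> bounded_linear T \<and> compact (closure (T ` cball 0 1))"

definition canon :: "'a::real_normed_vector \<Rightarrow> (('a \<Rightarrow>\<^sub>L real) \<Rightarrow>\<^sub>L real)" where
  "canon x = Blinfun (\<lambda>f. blinfun_apply f x)"

definition annihilator :: "'a::real_normed_vector set \<Rightarrow> ('a \<Rightarrow>\<^sub>L real) set" where
  "annihilator J = {f. \<forall>x\<in>J. blinfun_apply f x = 0}"

definition biannihilator :: "'a::real_normed_vector set \<Rightarrow> (('a \<Rightarrow>\<^sub>L real) \<Rightarrow>\<^sub>L real) set" where
  "biannihilator J = {\<phi>. \<forall>f\<in>annihilator J. blinfun_apply \<phi> f = 0}"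

definition reflexive_space :: "'a::real_normed_vector itself \<Rightarrow> bool" where
  "reflexive_space (_ :: 'a itself) \<longleftrightarrow> surj (canon :: 'a \<Rightarrow> _)"

text \<open>banach_quotient pi X J: the type 'q together with \<pi> is (a model of) the
  quotient space X/J, where X is a subspace of the ambient space containing J:
  \<pi> is linear on X, maps X onto 'q, and carries the quotient norm.\<close>
definition banach_quotient :: "('a::real_normed_vector \<Rightarrow> 'q::real_normed_vector) \<Rightarrow> 'a set \<Rightarrow> 'a set \<Rightarrow> bool" where
  "banach_quotient \<pi> X J \<longleftrightarrow>
     (\<forall>x\<in>X. \<forall>y\<in>X. \<pi> (x + y) = \<pi> x + \<pi> y) \<and>
     (\<forall>c. \<forall>x\<in>X. \<pi> (c *\<^sub>R x) = c *\<^sub>R \<pi> x) \<and>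
     \<pi> ` X = UNIV \<and>
     (\<forall>x\<in>X. norm (\<pi> x) = infdist x J)"

text \<open>CQLP of (X,J) (quotient modelled by \<pi>) tested against Banach spaces of type 'z.\<close>
definition cqlp :: "'z::banach itself \<Rightarrow> ('a::real_normed_vector \<Rightarrow> 'q::real_normed_vector) \<Rightarrow> 'a set \<Rightarrow> 'a set \<Rightarrow> bool" where
  "cqlp (_ :: 'z itself) \<pi> X J \<longleftrightarrow>
     (\<forall>T :: 'z \<Rightarrow> 'q. compact_op T \<longrightarrow>
        (\<exists>S :: 'z \<Rightarrow> 'a. compact_op S \<and> range S \<subseteq> X \<and> (\<forall>z. \<pi> (S z) = T z) \<and> onorm S = onorm T))"

end

theory Submission
  imports Defs
begin


definition hbgood :: "('a::real_vector \<Rightarrow> real) \<Rightarrow> 'a \<Rightarrow> real \<Rightarrow> ('a \<times> real) set \<Rightarrow> bool" where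
  "hbgood p x0 a G \<longleftrightarrow> (x0, a) \<in> G \<and>
     (\<forall>x u v. (x,u)\<in>G \<longrightarrow> (x,v)\<in>G \<longrightarrow> u = v) \<and>
     (\<forall>x u y v. (x,u)\<in>G \<longrightarrow> (y,v)\<in>G \<longrightarrow> (x+y,u+v)\<in>G) \<and>
     (\<forall>c x u. (x,u)\<in>G \<longrightarrow> (c *\<^sub>R x, c*u)\<in>G) \<and>
     (\<forall>x u. (x,u)\<in>G \<longrightarrow> u \<le> p x)"

lemma hb_extend:
  fixes p :: "'a::real_vector \<Rightarrow> real"
  assumes sub: "\<And>x y. p (x + y) \<le> p x + p y"
    and hom: "\<And>c x. c \<ge> 0 \<Longrightarrow> p (c *\<^sub>R x) = c * p x"
    and G: "hbgood p x0 a G"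
    and y: "\<And>u. (y,u) \<notin> G"
  shows "\<exists>G'. hbgood p x0 a G' \<and> G \<subseteq> G' \<and> G' \<noteq> G"
proof -
  have fnc: "\<And>x u v. (x,u)\<in>G \<Longrightarrow> (x,v)\<in>G \<Longrightarrow> u = v"
   and add: "\<And>x u y v. (x,u)\<in>G \<Longrightarrow> (y,v)\<in>G \<Longrightarrow> (x+y,u+v)\<in>G"
   and scl: "\<And>c x u. (x,u)\<in>G \<Longrightarrow> (c *\<^sub>R x, c*u)\<in>G"
   and dom: "\<And>x u. (x,u)\<in>G \<Longrightarrow> u \<le> p x"
   and x0: "(x0,a) \<in> G"
    using G unfolding hbgood_def by blast+
  have zero: "(0,0) \<in> G" using scl[OF x0, of 0] by simp
  define L where "L = {u - p (x - y) | x u. (x,u) \<in> G}"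
  define c where "c = Sup L"
  have key: "u - p (x - y) \<le> p (x' + y) - u'" if "(x,u)\<in>G" "(x',u')\<in>G" for x u x' u'
  proof -
    have "u + u' \<le> p (x + x')" using dom[OF add[OF that]] .
    also have "x + x' = (x - y) + (x' + y)" by simp
    finally show ?thesis using sub[of "x - y" "x' + y"] by linarith
  qed
  have Lne: "L \<noteq> {}" using zero unfolding L_def by blast
  have c1: "u - p (x - y) \<le> c" if "(x,u)\<in>G" for x u
    unfolding c_def
  proof (rule cSup_upper)
    show "u - p (x - y) \<in> L" using that unfolding L_def by blast
    have "\<forall>l\<in>L. l \<le> p (0 + y) - 0" unfolding L_def using key[OF _ zero] by blast
    thus "bdd_above L" by (meson bdd_aboveI)
  qed
  have c2: "c \<le> p (x' + y) - u'" if "(x',u')\<in>G" for x' u'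
    unfolding c_def using Lne key that unfolding L_def by (auto intro!: cSup_least)
  define G' where "G' = {(x + t *\<^sub>R y, u + t * c) | x u t. (x,u) \<in> G}"
  have domG': "u + t * c \<le> p (x + t *\<^sub>R y)" if "(x,u)\<in>G" for x u t
  proof (cases "t = 0")
    case True then show ?thesis using dom[OF that] by simp
  next
    case False
    show ?thesis
    proof (cases "t > 0")
      case True
      have m: "((1/t) *\<^sub>R x, (1/t) * u) \<in> G" using scl[OF that] .
      have "c \<le> p ((1/t) *\<^sub>R x + y) - (1/t) * u" using c2[OF m] .
      hence "t * c \<le> t * p ((1/t) *\<^sub>R x + y) - u" using True
        by (simp add: field_simps)
      also have "t * p ((1/t) *\<^sub>R x + y) = p (t *\<^sub>R ((1/t) *\<^sub>R x + y))"
        using hom[of t] True by simp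
      also have "t *\<^sub>R ((1/t) *\<^sub>R x + y) = x + t *\<^sub>R y" using True
        by (simp add: scaleR_add_right)
      finally show ?thesis by linarith
    next
      case False2: False
      define s where "s = - t"
      have s: "s > 0" using False False2 s_def by linarith
      have m: "((1/s) *\<^sub>R x, (1/s) * u) \<in> G" using scl[OF that] .
      have "(1/s) * u - p ((1/s) *\<^sub>R x - y) \<le> c" using c1[OF m] .
      hence "u - s * p ((1/s) *\<^sub>R x - y) \<le> s * c" using s
        by (simp add: field_simps)
      also have "s * p ((1/s) *\<^sub>R x - y) = p (s *\<^sub>R ((1/s) *\<^sub>R x - y))"
        using hom[of s] s by simp
      also have "s *\<^sub>R ((1/s) *\<^sub>R x - y) = x + t *\<^sub>R y" using s s_def
        by (simp add: scaleR_diff_right)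
      finally show ?thesis using s_def by simp
    qed
  qed
  have yin: "\<exists>u. (y, u) \<in> G" if "(x,u)\<in>G" "(x',u')\<in>G" "x + t *\<^sub>R y = x' + t' *\<^sub>R y" "t \<noteq> t'"
    for x u x' u' t t'
  proof -
    have "(x' - x, u' - u) \<in> G" using add[OF that(2) scl[OF that(1), of "-1"]] by simp
    hence "((1/(t - t')) *\<^sub>R (x' - x), (1/(t - t')) * (u' - u)) \<in> G" by (rule scl)
    moreover have "(1/(t - t')) *\<^sub>R (x' - x) = y"
    proof -
      have "x' - x = (t - t') *\<^sub>R y" using that(3) by (simp add: algebra_simps)
      thus ?thesis using that(4) by simp
    qed
    ultimately show ?thesis by auto
  qed
  have "hbgood p x0 a G'"
    unfolding hbgood_def
  proof (intro conjI allI impI)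
    have "(x0 + 0 *\<^sub>R y, a + 0 * c) \<in> G'" unfolding G'_def using x0 by blast
    thus "(x0, a) \<in> G'" by simp
  next
    fix x u v assume a1: "(x, u) \<in> G'" "(x, v) \<in> G'"
    then obtain x1 u1 t1 x2 u2 t2 where e: "(x1,u1)\<in>G" "(x2,u2)\<in>G"
      "x = x1 + t1 *\<^sub>R y" "u = u1 + t1 * c" "x = x2 + t2 *\<^sub>R y" "v = u2 + t2 * c"
      unfolding G'_def by blast
    have "t1 = t2"
    proof (rule ccontr)
      assume "t1 \<noteq> t2"
      from yin[OF e(1) e(2) _ this] e(3,5) obtain w where "(y,w)\<in>G" by auto
      with y show False by blast
    qed
    thus "u = v" using e fnc by auto
  next
    fix x u z v assume a1: "(x, u) \<in> G'" "(z, v) \<in> G'"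
    then obtain x1 u1 t1 x2 u2 t2 where e: "(x1,u1)\<in>G" "(x2,u2)\<in>G"
      "x = x1 + t1 *\<^sub>R y" "u = u1 + t1 * c" "z = x2 + t2 *\<^sub>R y" "v = u2 + t2 * c"
      unfolding G'_def by blast
    have "(x1 + x2, u1 + u2) \<in> G" using add e by blast
    moreover have "x + z = (x1 + x2) + (t1 + t2) *\<^sub>R y" "u + v = (u1 + u2) + (t1 + t2) * c"
      using e by (auto simp: algebra_simps)
    ultimately show "(x + z, u + v) \<in> G'" unfolding G'_def by blast
  next
    fix d x u assume "(x, u) \<in> G'"
    then obtain x1 u1 t1 where e: "(x1,u1)\<in>G" "x = x1 + t1 *\<^sub>R y" "u = u1 + t1 * c"
      unfolding G'_def by blast
    have "(d *\<^sub>R x1, d * u1) \<in> G" using scl e by blast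
    moreover have "d *\<^sub>R x = d *\<^sub>R x1 + (d * t1) *\<^sub>R y" "d * u = d * u1 + (d * t1) * c"
      using e by (auto simp: algebra_simps)
    ultimately show "(d *\<^sub>R x, d * u) \<in> G'" unfolding G'_def by blast
  next
    fix x u assume "(x, u) \<in> G'"
    then obtain x1 u1 t1 where e: "(x1,u1)\<in>G" "x = x1 + t1 *\<^sub>R y" "u = u1 + t1 * c"
      unfolding G'_def by blast
    show "u \<le> p x" using domG'[OF e(1)] e by simp
  qed
  moreover have "G \<subseteq> G'"
  proof
    fix z assume "z \<in> G"
    then obtain x u where z: "z = (x,u)" "(x,u)\<in>G" by (cases z) auto
    have "(x + 0 *\<^sub>R y, u + 0 * c) \<in> G'" unfolding G'_def using z(2) by blast
    thus "z \<in> G'" using z by simp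
  qed
  moreover have "(y, c) \<in> G'"
  proof -
    have "(0 + 1 *\<^sub>R y, 0 + 1 * c) \<in> G'" unfolding G'_def using zero by blast
    thus ?thesis by simp
  qed
  ultimately show ?thesis using y by blast
qed

lemma hb_union_chain:
  assumes ch: "subset.chain {G. hbgood p x0 a G} C" and ne: "C \<noteq> {}"
  shows "hbgood p x0 a (\<Union>C)"
proof -
  have CA: "\<And>X. X \<in> C \<Longrightarrow> hbgood p x0 a X" and tot: "\<And>X Y. X \<in> C \<Longrightarrow> Y \<in> C \<Longrightarrow> X \<subseteq> Y \<or> Y \<subseteq> X"
    using ch unfolding subset_chain_def by auto
  have two: "\<exists>Z\<in>C. P \<in> Z \<and> Q \<in> Z" if pq: "P \<in> \<Union>C" "Q \<in> \<Union>C" for P Q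
  proof -
    obtain X Y where "X \<in> C" "Y \<in> C" "P \<in> X" "Q \<in> Y" using pq by blast
    thus ?thesis using tot[of X Y] by blast
  qed
  obtain X0 where X0: "X0 \<in> C" using ne by blast
  show ?thesis unfolding hbgood_def
  proof (intro conjI allI impI)
    show "(x0, a) \<in> \<Union>C" using CA[OF X0] X0 unfolding hbgood_def by blast
  next
    fix x u v assume "(x, u) \<in> \<Union>C" "(x, v) \<in> \<Union>C"
    then obtain Z where "Z \<in> C" "(x,u) \<in> Z" "(x,v) \<in> Z" using two by blast
    thus "u = v" using CA unfolding hbgood_def by blast
  next
    fix x u y v assume "(x, u) \<in> \<Union>C" "(y, v) \<in> \<Union>C"
    then obtain Z where Z: "Z \<in> C" "(x,u) \<in> Z" "(y,v) \<in> Z" using two by blast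
    hence "(x+y, u+v) \<in> Z" using CA[OF Z(1)] unfolding hbgood_def by blast
    thus "(x+y, u+v) \<in> \<Union>C" using Z by blast
  next
    fix c x u assume "(x, u) \<in> \<Union>C"
    then obtain Z where Z: "Z \<in> C" "(x,u) \<in> Z" by blast
    hence "(c *\<^sub>R x, c*u) \<in> Z" using CA[OF Z(1)] unfolding hbgood_def by blast
    thus "(c *\<^sub>R x, c*u) \<in> \<Union>C" using Z by blast
  next
    fix x u assume "(x, u) \<in> \<Union>C"
    then obtain Z where Z: "Z \<in> C" "(x,u) \<in> Z" by blast
    thus "u \<le> p x" using CA[OF Z(1)] unfolding hbgood_def by blast
  qed
qed

lemma hb_real:
  fixes p :: "'a::real_vector \<Rightarrow> real"
  assumes sub: "\<And>x y. p (x + y) \<le> p x + p y"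
    and hom: "\<And>c x. c \<ge> 0 \<Longrightarrow> p (c *\<^sub>R x) = c * p x"
    and a1: "a \<le> p x0" and a2: "- a \<le> p (- x0)"
  shows "\<exists>F. linear F \<and> F x0 = a \<and> (\<forall>x. F x \<le> p x)"
proof -
  have p0: "p 0 = 0" using hom[of 0 0] by simp
  define B where "B = {(t *\<^sub>R x0, t * a) | t. True}"
  have "hbgood p x0 a B" unfolding hbgood_def
  proof (intro conjI allI impI)
    have "(1 *\<^sub>R x0, 1 * a) \<in> B" unfolding B_def by blast
    thus "(x0, a) \<in> B" by simp
  next
    fix x u v assume "(x, u) \<in> B" "(x, v) \<in> B"
    then obtain t s where e: "x = t *\<^sub>R x0" "u = t * a" "x = s *\<^sub>R x0" "v = s * a" unfolding B_def by blast
    show "u = v"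
    proof (cases "x0 = 0")
      case True
      hence "a = 0" using a1 a2 p0 by simp
      thus ?thesis using e by simp
    next
      case False
      have "t *\<^sub>R x0 = s *\<^sub>R x0" using e by metis
      hence "t = s" using False by simp
      thus ?thesis using e by simp
    qed
  next
    fix x u y v assume "(x, u) \<in> B" "(y, v) \<in> B"
    then obtain t s where e: "x = t *\<^sub>R x0" "u = t * a" "y = s *\<^sub>R x0" "v = s * a" unfolding B_def by blast
    have "x + y = (t + s) *\<^sub>R x0" "u + v = (t + s) * a" using e by (auto simp: algebra_simps)
    thus "(x + y, u + v) \<in> B" unfolding B_def by blast
  next
    fix c x u assume "(x, u) \<in> B"
    then obtain t where e: "x = t *\<^sub>R x0" "u = t * a" unfolding B_def by blast
    have "c *\<^sub>R x = (c * t) *\<^sub>R x0" "c * u = (c * t) * a" using e by auto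
    thus "(c *\<^sub>R x, c * u) \<in> B" unfolding B_def by blast
  next
    fix x u assume "(x, u) \<in> B"
    then obtain t where e: "x = t *\<^sub>R x0" "u = t * a" unfolding B_def by blast
    show "u \<le> p x"
    proof (cases "t \<ge> 0")
      case True
      thus ?thesis using e hom[OF True, of x0] a1 by (simp add: mult_left_mono)
    next
      case False
      hence "-t \<ge> 0" by simp
      from hom[OF this, of "-x0"] have "p x = (-t) * p (-x0)" using e by simp
      moreover have "(-t) * (-a) \<le> (-t) * p (-x0)" using a2 \<open>-t \<ge> 0\<close> by (rule mult_left_mono)
      ultimately show ?thesis using e by simp
    qed
  qed
  then have ne: "{G. hbgood p x0 a G} \<noteq> {}" by blast
  have "\<exists>M\<in>{G. hbgood p x0 a G}. \<forall>X\<in>{G. hbgood p x0 a G}. M \<subseteq> X \<longrightarrow> X = M"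
    by (rule subset_Zorn_nonempty[OF ne]) (simp add: hb_union_chain)
  then obtain M where M: "M \<in> {G. hbgood p x0 a G}" and max: "\<forall>X\<in>{G. hbgood p x0 a G}. M \<subseteq> X \<longrightarrow> X = M"
    by blast
  have Mg: "hbgood p x0 a M" using M by simp
  have tot: "\<exists>u. (y,u) \<in> M" for y
  proof (rule ccontr)
    assume "\<not> (\<exists>u. (y,u) \<in> M)"
    then obtain G' where "hbgood p x0 a G'" "M \<subseteq> G'" "G' \<noteq> M"
      using hb_extend[OF sub hom Mg] by blast
    thus False using max by blast
  qed
  have fnc: "\<And>x u v. (x,u)\<in>M \<Longrightarrow> (x,v)\<in>M \<Longrightarrow> u = v"
   and add: "\<And>x u y v. (x,u)\<in>M \<Longrightarrow> (y,v)\<in>M \<Longrightarrow> (x+y,u+v)\<in>M"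
   and scl: "\<And>c x u. (x,u)\<in>M \<Longrightarrow> (c *\<^sub>R x, c*u)\<in>M"
   and dom: "\<And>x u. (x,u)\<in>M \<Longrightarrow> u \<le> p x"
   and x0: "(x0,a) \<in> M"
    using Mg unfolding hbgood_def by blast+
  define F where "F x = (THE u. (x,u) \<in> M)" for x
  have FM: "(x, F x) \<in> M" for x
    unfolding F_def by (rule theI') (use tot[of x] fnc in blast)
  have Fe: "(x,u) \<in> M \<Longrightarrow> F x = u" for x u by (rule fnc[OF FM])
  have "linear F"
  proof (rule linearI)
    show "F (x + y) = F x + F y" for x y using Fe[OF add[OF FM FM]] .
    show "F (c *\<^sub>R x) = c *\<^sub>R F x" for c x using Fe[OF scl[OF FM]] by simp
  qed
  moreover have "F x0 = a" using Fe[OF x0] .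
  moreover have "\<forall>x. F x \<le> p x" using dom[OF FM] by blast
  ultimately show ?thesis by blast
qed



lemma infdist_ge: "A \<noteq> {} \<Longrightarrow> (\<And>a. a \<in> A \<Longrightarrow> d \<le> dist x a) \<Longrightarrow> d \<le> infdist x A"
  by (simp add: infdist_notempty cINF_greatest)

lemma infdist_scale_le:
  fixes J :: "'a::real_normed_vector set"
  assumes J: "subspace J"
  shows "infdist (c *\<^sub>R y) J \<le> \<bar>c\<bar> * infdist y J"
proof (cases "c = 0")
  case True
  have "(0::'a) \<in> J" using J subspace_0 by blast
  then show ?thesis using True infdist_zero[of 0 J] by simp
next
  case False
  have "infdist (c *\<^sub>R y) J / \<bar>c\<bar> \<le> infdist y J"
  proof (rule infdist_ge)
    show "J \<noteq> {}" using J subspace_0 by blast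
    fix j assume j: "j \<in> J"
    have "infdist (c *\<^sub>R y) J \<le> dist (c *\<^sub>R y) (c *\<^sub>R j)"
      using subspace_scale[OF J j] by (rule infdist_le)
    also have "\<dots> = \<bar>c\<bar> * dist y j"
      by (simp add: dist_norm scaleR_diff_right[symmetric])
    finally show "infdist (c *\<^sub>R y) J / \<bar>c\<bar> \<le> dist y j" using False
      by (simp add: divide_le_eq mult.commute)
  qed
  then show ?thesis using False by (simp add: divide_le_eq mult.commute)
qed

lemma infdist_add_le:
  fixes J :: "'a::real_normed_vector set"
  assumes J: "subspace J"
  shows "infdist (y + z) J \<le> infdist y J + infdist z J"
proof -
  have ne: "J \<noteq> {}" using J subspace_0 by blast
  have "infdist (y + z) J - infdist z J \<le> infdist y J"
  proof (rule infdist_ge[OF ne])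
    fix j assume j: "j \<in> J"
    have "infdist (y + z) J - dist y j \<le> infdist z J"
    proof (rule infdist_ge[OF ne])
      fix k assume k: "k \<in> J"
      have "infdist (y + z) J \<le> dist (y + z) (j + k)"
        using subspace_add[OF J j k] by (rule infdist_le)
      also have "\<dots> \<le> dist y j + dist z k"
        unfolding dist_norm
        by (metis add_diff_add norm_triangle_ineq)
      finally show "infdist (y + z) J - dist y j \<le> dist z k" by simp
    qed
    thus "infdist (y + z) J - infdist z J \<le> dist y j" by simp
  qed
  thus ?thesis by simp
qed

lemma infdist_le_norm:
  fixes J :: "'a::real_normed_vector set"
  assumes J: "subspace J"
  shows "infdist y J \<le> norm y"
  using infdist_le[OF subspace_0[OF J], of y] by simp

lemma hb_dist:
  fixes J :: "'a::real_normed_vector set"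
  assumes J: "subspace J"
  shows "\<exists>f :: 'a \<Rightarrow>\<^sub>L real. (\<forall>j\<in>J. blinfun_apply f j = 0) \<and>
            (\<forall>y. \<bar>blinfun_apply f y\<bar> \<le> infdist y J) \<and> blinfun_apply f x = infdist x J"
proof -
  define p where "p y = infdist y J" for y
  have sub: "p (y + z) \<le> p y + p z" for y z unfolding p_def by (rule infdist_add_le[OF J])
  have hom: "p (c *\<^sub>R y) = c * p y" if c: "c \<ge> 0" for c y
  proof (cases "c = 0")
    case True then show ?thesis unfolding p_def using infdist_zero[OF subspace_0[OF J]] by simp
  next
    case False
    have "p (c *\<^sub>R y) \<le> c * p y" unfolding p_def using infdist_scale_le[OF J, of c y] c by simp
    moreover have "p y \<le> (1/c) * p (c *\<^sub>R y)"
      unfolding p_def using infdist_scale_le[OF J, of "1/c" "c *\<^sub>R y"] c False by simp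
    ultimately show ?thesis using c False by (simp add: field_simps)
  qed
  have neg: "p (- y) = p y" for y
    using infdist_scale_le[OF J, of "-1" y] infdist_scale_le[OF J, of "-1" "-y"] unfolding p_def by simp
  have a2: "- p x \<le> p (- x)" using neg[of x] infdist_nonneg[of x J] unfolding p_def by simp
  obtain F where F: "linear F" "F x = p x" "\<forall>y. F y \<le> p y"
    using hb_real[OF sub hom order_refl a2] by blast
  have absF: "\<bar>F y\<bar> \<le> p y" for y
  proof -
    have "- F y = F (- y)" using F(1) by (simp add: linear_neg)
    also have "\<dots> \<le> p y" using F(3) neg by metis
    finally show ?thesis using F(3) by (simp add: abs_le_iff)
  qed
  have bl: "bounded_linear F"
  proof (rule bounded_linear_intro[where K=1])
    show "F (y + z) = F y + F z" for y z using F(1) by (simp add: linear_add)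
    show "F (r *\<^sub>R y) = r *\<^sub>R F y" for r y using F(1) by (simp add: linear_scale)
    show "norm (F y) \<le> norm y * 1" for y using absF[of y] infdist_le_norm[OF J, of y] unfolding p_def by simp
  qed
  have ap: "blinfun_apply (Blinfun F) = F" by (rule bounded_linear_Blinfun_apply[OF bl])
  have "\<forall>j\<in>J. F j = 0"
  proof
    fix j assume "j \<in> J"
    hence "p j = 0" unfolding p_def by simp
    thus "F j = 0" using absF[of j] by simp
  qed
  thus ?thesis using absF F(2) unfolding ap p_def by (intro exI[of _ "Blinfun F"]) (simp add: ap)
qed

lemma canon_apply [simp]: "blinfun_apply (canon x) f = blinfun_apply f x"
  unfolding canon_def by (simp add: bounded_linear_Blinfun_apply blinfun.bounded_linear_left)

lemma canon_add: "canon (x + y) = canon x + canon y"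
  by (rule blinfun_eqI) (simp add: blinfun.add_left blinfun.add_right)

lemma canon_scale: "canon (c *\<^sub>R x) = c *\<^sub>R canon x"
  by (rule blinfun_eqI) (simp add: blinfun.scaleR_left blinfun.scaleR_right)

lemma canon_diff: "canon (x - y) = canon x - canon y"
  by (rule blinfun_eqI) (simp add: blinfun.diff_left blinfun.diff_right)

lemma norm_canon: "norm (canon x) = norm x"
proof (rule antisym)
  show "norm (canon x) \<le> norm x"
    by (rule norm_blinfun_bound) (auto, metis norm_blinfun mult.commute real_norm_def)
  obtain f :: "'a \<Rightarrow>\<^sub>L real" where f: "\<forall>y. \<bar>blinfun_apply f y\<bar> \<le> infdist y {0}" "blinfun_apply f x = infdist x {0}"
    using hb_dist[OF subspace_single_0, of x] by blast
  have nf: "norm f \<le> 1"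
    by (rule norm_blinfun_bound) (use f(1) in auto)
  have "norm x = blinfun_apply (canon x) f" using f(2) by simp
  also have "\<dots> \<le> norm (canon x) * norm f"
    by (metis norm_blinfun real_norm_def abs_ge_self order_trans)
  also have "\<dots> \<le> norm (canon x)" using nf by (simp add: mult_left_le)
  finally show "norm x \<le> norm (canon x)" .
qed



lemma compact_closure_image:
  fixes h :: "'a::metric_space \<Rightarrow> 'b::metric_space"
  assumes "compact (closure A)" "closure A \<subseteq> D" "continuous_on D h"
  shows "compact (closure (h ` A))"
proof -
  have c: "compact (h ` closure A)"
    using assms by (meson compact_continuous_image continuous_on_subset)
  have "closure (h ` A) \<subseteq> h ` closure A"
    by (rule closure_minimal) (simp_all add: image_mono closure_subset compact_imp_closed[OF c])
  hence "closure (h ` A) = h ` closure A \<inter> closure (h ` A)" by blast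
  thus ?thesis using c by (metis closed_closure compact_Int_closed)
qed

lemma compact_op_comp:
  assumes "compact_op S" "bounded_linear h"
  shows "compact_op (h \<circ> S)"
proof -
  have bS: "bounded_linear S" and cS: "compact (closure (S ` cball 0 1))"
    using assms(1) unfolding compact_op_def by auto
  have "bounded_linear (h \<circ> S)" using bounded_linear_compose[OF assms(2) bS] by (simp add: o_def)
  moreover have "compact (closure (h ` (S ` cball 0 1)))"
    by (rule compact_closure_image[OF cS subset_UNIV linear_continuous_on[OF assms(2)]])
  ultimately show ?thesis unfolding compact_op_def by (simp add: image_comp)
qed

lemma onorm_eq_norm: "(\<And>x. norm (f x) = norm (g x)) \<Longrightarrow> onorm f = onorm g"
  by (simp add: onorm_def)

lemma iso_lin:
  fixes h :: "'a::real_normed_vector \<Rightarrow> 'b::real_normed_vector"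
  assumes "\<And>x y. h (x + y) = h x + h y" "\<And>c x. h (c *\<^sub>R x) = c *\<^sub>R h x" "\<And>x. norm (h x) = norm x"
  shows "bounded_linear h" "\<And>x y. h x = h y \<Longrightarrow> x = y"
proof -
  show bl: "bounded_linear h" by (rule bounded_linear_intro[where K=1]) (simp_all add: assms)
  fix x y assume "h x = h y"
  hence "h (x - y) = 0" using linear_diff[OF bounded_linear.linear[OF bl]] by simp
  thus "x = y" using assms(3)[of "x - y"] by simp
qed

lemma bq_parts:
  assumes "banach_quotient \<pi> X J"
  shows "\<And>x y. x \<in> X \<Longrightarrow> y \<in> X \<Longrightarrow> \<pi> (x + y) = \<pi> x + \<pi> y"
    "\<And>c x. x \<in> X \<Longrightarrow> \<pi> (c *\<^sub>R x) = c *\<^sub>R \<pi> x"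
    "\<pi> ` X = UNIV" "\<And>x. x \<in> X \<Longrightarrow> norm (\<pi> x) = infdist x J"
  using assms unfolding banach_quotient_def by simp_all

lemma bq_UNIV:
  assumes "banach_quotient \<pi> UNIV J" "subspace J"
  shows "bounded_linear \<pi>" "\<And>x. norm (\<pi> x) = infdist x J" "surj \<pi>"
proof -
  show n: "\<And>x. norm (\<pi> x) = infdist x J" using bq_parts(4)[OF assms(1)] by simp
  show "surj \<pi>" using bq_parts(3)[OF assms(1)] by simp
  show "bounded_linear \<pi>"
  proof (rule bounded_linear_intro[where K=1])
    show "\<pi> (x + y) = \<pi> x + \<pi> y" for x y using bq_parts(1)[OF assms(1)] by simp
    show "\<pi> (r *\<^sub>R x) = r *\<^sub>R \<pi> x" for r x using bq_parts(2)[OF assms(1)] by simp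
    show "norm (\<pi> x) \<le> norm x * 1" for x using n[of x] infdist_le_norm[OF assms(2)] by simp
  qed
qed

lemma bq_diff:
  assumes "banach_quotient \<pi> X J" "subspace X" "x \<in> X" "y \<in> X"
  shows "\<pi> (x - y) = \<pi> x - \<pi> y"
proof -
  have m: "(-1) *\<^sub>R y \<in> X" using assms subspace_scale by blast
  have "\<pi> (x - y) = \<pi> (x + (-1) *\<^sub>R y)" by simp
  also have "\<dots> = \<pi> x + \<pi> ((-1) *\<^sub>R y)" using bq_parts(1)[OF assms(1) assms(3) m] .
  also have "\<pi> ((-1) *\<^sub>R y) = (-1) *\<^sub>R \<pi> y" using bq_parts(2)[OF assms(1) assms(4)] .
  finally show ?thesis by simp
qed

lemma bq_eq_iff:
  assumes "banach_quotient \<pi> X J" "subspace X" "x \<in> X" "y \<in> X" "closed J" "J \<noteq> {}"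
  shows "\<pi> x = \<pi> y \<longleftrightarrow> x - y \<in> J"
proof -
  have xy: "x - y \<in> X" using subspace_diff[OF assms(2-4)] .
  have "norm (\<pi> x - \<pi> y) = infdist (x - y) J"
    using bq_parts(4)[OF assms(1) xy] bq_diff[OF assms(1-4)] by simp
  moreover have "\<pi> x = \<pi> y \<longleftrightarrow> norm (\<pi> x - \<pi> y) = 0" by simp
  ultimately show ?thesis using in_closed_iff_infdist_zero[OF assms(5,6), of "x - y"] by simp
qed

lemma canon_bl: "bounded_linear (canon :: 'a::real_normed_vector \<Rightarrow> _)"
  by (rule iso_lin(1)) (simp_all add: canon_add canon_scale norm_canon)

lemma canon_inj: "canon x = canon y \<Longrightarrow> x = y"
  by (rule iso_lin(2)[of canon]) (simp_all add: canon_add canon_scale norm_canon)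



lemma part1:
  fixes J Y :: "'a::banach set" and \<pi> :: "'a \<Rightarrow> 'q::banach" and \<rho> :: "'a \<Rightarrow> 'r::banach"
  assumes J: "subspace J" "closed J" and Y: "subspace Y" "closed Y" and JY: "J \<subseteq> Y"
    and \<pi>: "banach_quotient \<pi> UNIV J" and \<rho>: "banach_quotient \<rho> Y J"
    and c: "cqlp TYPE('z::banach) \<pi> UNIV J"
  shows "cqlp TYPE('z) \<rho> Y J"
proof -
  have Jne: "J \<noteq> {}" using subspace_0[OF J(1)] by blast
  have sel: "\<exists>y. y \<in> Y \<and> \<rho> y = r" for r using bq_parts(3)[OF \<rho>] by (metis UNIV_I imageE)
  define \<iota> where "\<iota> r = \<pi> (SOME y. y \<in> Y \<and> \<rho> y = r)" for r
  have \<iota>\<rho>: "\<iota> (\<rho> y) = \<pi> y" if y: "y \<in> Y" for y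
  proof -
    define y' where "y' = (SOME y'. y' \<in> Y \<and> \<rho> y' = \<rho> y)"
    have y': "y' \<in> Y" "\<rho> y' = \<rho> y" unfolding y'_def using someI_ex[OF sel[of "\<rho> y"]] by auto
    have "y' - y \<in> J" using bq_eq_iff[OF \<rho> Y(1) y'(1) y J(2) Jne] y'(2) by simp
    hence "\<pi> y' = \<pi> y" using bq_eq_iff[OF \<pi> subspace_UNIV _ _ J(2) Jne] by simp
    thus ?thesis unfolding \<iota>_def y'_def by simp
  qed
  have nrm: "norm (\<iota> r) = norm r" for r
  proof -
    obtain y where y: "y \<in> Y" "\<rho> y = r" using sel by blast
    thus ?thesis using \<iota>\<rho>[OF y(1)] bq_parts(4)[OF \<pi>, of y] bq_parts(4)[OF \<rho> y(1)] by simp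
  qed
  have add: "\<iota> (r + s) = \<iota> r + \<iota> s" for r s
  proof -
    obtain y where y: "y \<in> Y" "\<rho> y = r" using sel by blast
    obtain y' where y': "y' \<in> Y" "\<rho> y' = s" using sel by blast
    have "\<rho> (y + y') = r + s" using bq_parts(1)[OF \<rho> y(1) y'(1)] y y' by simp
    hence "\<iota> (r + s) = \<pi> (y + y')" using \<iota>\<rho> subspace_add[OF Y(1) y(1) y'(1)] by metis
    also have "\<dots> = \<pi> y + \<pi> y'" using bq_parts(1)[OF \<pi>] by simp
    finally show ?thesis using \<iota>\<rho> y y' by metis
  qed
  have scl: "\<iota> (a *\<^sub>R r) = a *\<^sub>R \<iota> r" for a r
  proof -
    obtain y where y: "y \<in> Y" "\<rho> y = r" using sel by blast
    have "\<rho> (a *\<^sub>R y) = a *\<^sub>R r" using bq_parts(2)[OF \<rho> y(1)] y by simp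
    hence "\<iota> (a *\<^sub>R r) = \<pi> (a *\<^sub>R y)" using \<iota>\<rho> subspace_scale[OF Y(1) y(1)] by metis
    also have "\<dots> = a *\<^sub>R \<pi> y" using bq_parts(2)[OF \<pi>] by simp
    finally show ?thesis using \<iota>\<rho> y by metis
  qed
  have bl: "bounded_linear \<iota>" and inj: "\<And>x y. \<iota> x = \<iota> y \<Longrightarrow> x = y"
    using iso_lin[of \<iota>, OF add scl nrm] by blast+
  show ?thesis unfolding cqlp_def
  proof (intro allI impI)
    fix T :: "'z \<Rightarrow> 'r" assume T: "compact_op T"
    have T': "compact_op (\<iota> \<circ> T)" by (rule compact_op_comp[OF T bl])
    have oT: "onorm (\<iota> \<circ> T) = onorm T" by (rule onorm_eq_norm) (simp add: nrm)
    obtain S :: "'z \<Rightarrow> 'a" where S: "compact_op S" "\<forall>z. \<pi> (S z) = (\<iota> \<circ> T) z" "onorm S = onorm (\<iota> \<circ> T)"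
      using c T' unfolding cqlp_def by blast
    have SY: "S z \<in> Y" for z
    proof -
      obtain y where y: "y \<in> Y" "\<rho> y = T z" using sel by blast
      have "\<pi> (S z) = \<pi> y" using S(2) \<iota>\<rho>[OF y(1)] y(2) by simp
      hence "S z - y \<in> J" using bq_eq_iff[OF \<pi> subspace_UNIV _ _ J(2) Jne] by simp
      hence "(S z - y) + y \<in> Y" using JY subspace_add[OF Y(1) _ y(1)] by blast
      thus ?thesis by simp
    qed
    have "\<rho> (S z) = T z" for z
      using inj[of "\<rho> (S z)" "T z"] \<iota>\<rho>[OF SY[of z]] S(2) by simp
    thus "\<exists>S :: 'z \<Rightarrow> 'a. compact_op S \<and> range S \<subseteq> Y \<and> (\<forall>z. \<rho> (S z) = T z) \<and> onorm S = onorm T"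
      using S SY oT by (intro exI[of _ S]) auto
  qed
qed



lemma closed_canon_image:
  fixes J :: "'a::banach set"
  assumes "subspace J" "closed J"
  shows "closed (canon ` J)"
proof -
  have "complete J" using assms(2) by (simp add: complete_eq_closed)
  hence "complete (canon ` J)"
    by (intro complete_isometric_image[where e=1, OF _ assms(1) canon_bl]) (simp_all add: norm_canon)
  thus ?thesis by (rule complete_imp_closed)
qed

lemma infdist_canon_image:
  fixes J :: "'a::real_normed_vector set"
  assumes "J \<noteq> {}"
  shows "infdist (canon y) (canon ` J) = infdist y J"
proof -
  have d: "dist (canon y) (canon j) = dist y j" for j
    by (simp add: dist_norm canon_diff[symmetric] norm_canon)
  show ?thesis using assms by (simp add: infdist_notempty image_image d)
qed

lemma part3:
  fixes J :: "'c::banach set" and \<pi> :: "'c \<Rightarrow> 'u::banach"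
    and \<rho> :: "(('c \<Rightarrow>\<^sub>L real) \<Rightarrow>\<^sub>L real) \<Rightarrow> 'v::banach"
  assumes J: "subspace J" "closed J"
    and \<pi>: "banach_quotient \<pi> UNIV J" and \<rho>: "banach_quotient \<rho> UNIV (canon ` J)"
    and c: "cqlp TYPE('z::banach) \<rho> UNIV (canon ` J)"
  shows "cqlp TYPE('z) \<pi> UNIV J"
proof -
  define K where "K = canon ` J"
  have Jne: "J \<noteq> {}" using subspace_0[OF J(1)] by blast
  have Kne: "K \<noteq> {}" using Jne K_def by blast
  have Ks: "subspace K" unfolding K_def
    by (rule linear_subspace_image[OF bounded_linear.linear[OF canon_bl] J(1)])
  have Kc: "closed K" unfolding K_def by (rule closed_canon_image[OF J])
  have \<rho>': "banach_quotient \<rho> UNIV K" using \<rho> K_def by simp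
  have sel: "\<exists>x. \<pi> x = q" for q using bq_parts(3)[OF \<pi>] by (metis UNIV_I imageE)
  have nrc: "norm (\<rho> (canon x)) = norm (\<pi> x)" for x
    using bq_parts(4)[OF \<rho>', of "canon x"] bq_parts(4)[OF \<pi>, of x] infdist_canon_image[OF Jne, of x]
    unfolding K_def by simp
  have rcd: "\<rho> (canon (x - x')) = \<rho> (canon x) - \<rho> (canon x')" for x x'
    using bq_diff[OF \<rho>' subspace_UNIV] by (simp add: canon_diff)
  define \<iota> where "\<iota> q = \<rho> (canon (SOME x. \<pi> x = q))" for q
  have \<iota>\<pi>: "\<iota> (\<pi> x) = \<rho> (canon x)" for x
  proof -
    define x' where "x' = (SOME x'. \<pi> x' = \<pi> x)"
    have x': "\<pi> x' = \<pi> x" unfolding x'_def using someI_ex[OF sel[of "\<pi> x"]] by auto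
    have "\<pi> (x' - x) = 0" using bq_diff[OF \<pi> subspace_UNIV] x' by simp
    hence "\<rho> (canon (x' - x)) = 0" using nrc[of "x' - x"] by simp
    hence "\<rho> (canon x') = \<rho> (canon x)" using rcd by simp
    thus ?thesis unfolding \<iota>_def x'_def by simp
  qed
  have nrm: "norm (\<iota> q) = norm q" for q
    using sel[of q] \<iota>\<pi> nrc by metis
  have add: "\<iota> (r + s) = \<iota> r + \<iota> s" for r s
  proof -
    obtain y y' where y: "\<pi> y = r" "\<pi> y' = s" using sel by metis
    have "\<iota> (r + s) = \<iota> (\<pi> (y + y'))" using bq_parts(1)[OF \<pi>] y by simp
    also have "\<dots> = \<rho> (canon y) + \<rho> (canon y')" using \<iota>\<pi> bq_parts(1)[OF \<rho>'] by (simp add: canon_add)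
    finally show ?thesis using \<iota>\<pi>[of y] \<iota>\<pi>[of y'] y by simp
  qed
  have scl: "\<iota> (a *\<^sub>R r) = a *\<^sub>R \<iota> r" for a r
  proof -
    obtain y where y: "\<pi> y = r" using sel by metis
    have "\<iota> (a *\<^sub>R r) = \<iota> (\<pi> (a *\<^sub>R y))" using bq_parts(2)[OF \<pi>] y by simp
    also have "\<dots> = a *\<^sub>R \<rho> (canon y)" using \<iota>\<pi> bq_parts(2)[OF \<rho>'] by (simp add: canon_scale)
    finally show ?thesis using \<iota>\<pi>[of y] y by simp
  qed
  have bl: "bounded_linear \<iota>" and inj: "\<And>x y. \<iota> x = \<iota> y \<Longrightarrow> x = y"
    using iso_lin[of \<iota>, OF add scl nrm] by blast+
  define R where "R = range (canon :: 'c \<Rightarrow> _)"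
  have rclosed: "closed R" unfolding R_def
    using closed_canon_image[OF subspace_UNIV closed_UNIV] .
  define h where "h \<phi> = (SOME x. canon x = \<phi>)" for \<phi> :: "('c \<Rightarrow>\<^sub>L real) \<Rightarrow>\<^sub>L real"
  have hc: "h (canon x) = x" for x
  proof -
    have "canon (h (canon x)) = canon x" unfolding h_def by (rule someI_ex) blast
    thus ?thesis by (rule canon_inj)
  qed
  have hcont: "continuous_on (R) h"
    unfolding continuous_on_iff
  proof (intro ballI allI impI)
    fix \<phi> \<psi> and e :: real assume "\<phi> \<in> R" "e > 0"
    then obtain x where x: "\<phi> = canon x" unfolding R_def by blast
    show "\<exists>d>0. \<forall>\<psi>\<in>R. dist \<psi> \<phi> < d \<longrightarrow> dist (h \<psi>) (h \<phi>) < e"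
    proof (intro exI[of _ e] conjI ballI impI)
      fix \<psi> assume "\<psi> \<in> R" "dist \<psi> \<phi> < e"
      then obtain y where y: "\<psi> = canon y" unfolding R_def by blast
      have "dist (h \<psi>) (h \<phi>) = dist \<psi> \<phi>"
        using x y hc by (simp add: dist_norm canon_diff[symmetric] norm_canon)
      thus "dist (h \<psi>) (h \<phi>) < e" using \<open>dist \<psi> \<phi> < e\<close> by simp
    qed (use \<open>e > 0\<close> in simp)
  qed
  show ?thesis unfolding cqlp_def
  proof (intro allI impI)
    fix T :: "'z \<Rightarrow> 'u" assume T: "compact_op T"
    have T': "compact_op (\<iota> \<circ> T)" by (rule compact_op_comp[OF T bl])
    have oT: "onorm (\<iota> \<circ> T) = onorm T" by (rule onorm_eq_norm) (simp add: nrm)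
    obtain S :: "'z \<Rightarrow> _" where S: "compact_op S" "\<forall>z. \<rho> (S z) = (\<iota> \<circ> T) z" "onorm S = onorm (\<iota> \<circ> T)"
      using c T' unfolding cqlp_def by blast
    have Sbl: "bounded_linear S" and Scomp: "compact (closure (S ` cball 0 1))"
      using S(1) unfolding compact_op_def by auto
    have inr: "S z \<in> R" for z
    proof -
      obtain x where x: "\<pi> x = T z" using sel by blast
      have "\<rho> (S z) = \<rho> (canon x)" using S(2) \<iota>\<pi>[of x] x by simp
      hence "S z - canon x \<in> K" using bq_eq_iff[OF \<rho>' subspace_UNIV _ _ Kc Kne] by simp
      then obtain j where "S z - canon x = canon j" unfolding K_def by blast
      hence "S z = canon (x + j)" by (simp add: canon_add algebra_simps)
      thus ?thesis unfolding R_def by blast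
    qed
    define S' where "S' = h \<circ> S"
    have cS': "canon (S' z) = S z" for z
      using inr[of z] hc unfolding S'_def R_def by auto
    have nS': "norm (S' z) = norm (S z)" for z using cS' norm_canon by metis
    have addS': "S' (a + b) = S' a + S' b" for a b
      by (rule canon_inj) (simp add: cS' canon_add linear_add[OF bounded_linear.linear[OF Sbl]])
    have sclS': "S' (r *\<^sub>R a) = r *\<^sub>R S' a" for r a
      by (rule canon_inj) (simp add: cS' canon_scale linear_scale[OF bounded_linear.linear[OF Sbl]])
    obtain B where B: "\<And>x. norm (S x) \<le> norm x * B" using bounded_linear.bounded[OF Sbl] by blast
    have blS': "bounded_linear S'"
      by (rule bounded_linear_intro[where K=B]) (simp_all add: addS' sclS' nS' B)
    have "closure (S ` cball 0 1) \<subseteq> R"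
      by (rule closure_minimal) (use inr rclosed in auto)
    hence "compact (closure (h ` (S ` cball 0 1)))"
      by (rule compact_closure_image[OF Scomp _ hcont])
    hence cS'c: "compact_op S'" unfolding compact_op_def S'_def using blS' S'_def
      by (simp add: image_comp)
    have "\<iota> (\<pi> (S' z)) = \<iota> (T z)" for z using \<iota>\<pi> cS' S(2) by simp
    hence pS': "\<pi> (S' z) = T z" for z using inj by blast
    have "onorm S' = onorm S" by (rule onorm_eq_norm) (simp add: nS')
    thus "\<exists>S :: 'z \<Rightarrow> 'c. compact_op S \<and> range S \<subseteq> UNIV \<and> (\<forall>z. \<pi> (S z) = T z) \<and> onorm S = onorm T"
      using cS'c pS' S(3) oT by (intro exI[of _ S']) simp
  qed
qed



lemma canon_biann: "j \<in> J \<Longrightarrow> canon j \<in> biannihilator J"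
  by (simp add: biannihilator_def annihilator_def)

lemma zero_biann: "0 \<in> biannihilator J"
  by (simp add: biannihilator_def)

lemma infdist_canon_biann:
  fixes J :: "'a::real_normed_vector set"
  assumes J: "subspace J"
  shows "infdist (canon y) (biannihilator J) = infdist y J"
proof (rule antisym)
  have Jne: "J \<noteq> {}" using subspace_0[OF J] by blast
  show "infdist (canon y) (biannihilator J) \<le> infdist y J"
  proof (rule infdist_ge[OF Jne])
    fix j assume "j \<in> J"
    hence "infdist (canon y) (biannihilator J) \<le> dist (canon y) (canon j)"
      by (intro infdist_le canon_biann)
    thus "infdist (canon y) (biannihilator J) \<le> dist y j"
      by (simp add: dist_norm canon_diff[symmetric] norm_canon)
  qed
  obtain f :: "'a \<Rightarrow>\<^sub>L real" where f: "\<forall>j\<in>J. blinfun_apply f j = 0"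
      "\<forall>z. \<bar>blinfun_apply f z\<bar> \<le> infdist z J" "blinfun_apply f y = infdist y J"
    using hb_dist[OF J, of y] by blast
  have nf: "norm f \<le> 1"
    by (rule norm_blinfun_bound) (use f(2) infdist_le_norm[OF J] in \<open>auto intro: order_trans\<close>)
  have fa: "f \<in> annihilator J" using f(1) by (simp add: annihilator_def)
  show "infdist y J \<le> infdist (canon y) (biannihilator J)"
  proof (rule infdist_ge)
    show "biannihilator J \<noteq> {}" using zero_biann by blast
    fix \<phi> assume "\<phi> \<in> biannihilator J"
    hence "blinfun_apply \<phi> f = 0" using fa by (simp add: biannihilator_def)
    hence "infdist y J = blinfun_apply (canon y - \<phi>) f" using f(3) by (simp add: blinfun.diff_left)
    also have "\<dots> \<le> norm (canon y - \<phi>) * norm f"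
      by (metis norm_blinfun real_norm_def abs_ge_self order_trans)
    also have "\<dots> \<le> norm (canon y - \<phi>)" using nf by (simp add: mult_left_le)
    finally show "infdist y J \<le> dist (canon y) \<phi>" by (simp add: dist_norm)
  qed
qed

lemma factor_quot:
  fixes J :: "'b::banach set" and \<pi> :: "'b \<Rightarrow> 's::banach"
  assumes J: "subspace J" "closed J" and \<pi>: "banach_quotient \<pi> UNIV J"
    and f: "f \<in> annihilator J"
  shows "\<exists>g :: 's \<Rightarrow>\<^sub>L real. \<forall>x. blinfun_apply g (\<pi> x) = blinfun_apply f x"
proof -
  have Jne: "J \<noteq> {}" using subspace_0[OF J(1)] by blast
  have fJ: "\<And>j. j \<in> J \<Longrightarrow> blinfun_apply f j = 0" using f by (simp add: annihilator_def)
  have sel: "\<exists>x. \<pi> x = q" for q using bq_parts(3)[OF \<pi>] by (metis UNIV_I imageE)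
  define g0 where "g0 q = blinfun_apply f (SOME x. \<pi> x = q)" for q
  have g0: "g0 (\<pi> x) = blinfun_apply f x" for x
  proof -
    define x' where "x' = (SOME x'. \<pi> x' = \<pi> x)"
    have x': "\<pi> x' = \<pi> x" unfolding x'_def using someI_ex[OF sel[of "\<pi> x"]] by auto
    hence "x' - x \<in> J" using bq_eq_iff[OF \<pi> subspace_UNIV _ _ J(2) Jne] by simp
    hence "blinfun_apply f (x' - x) = 0" by (rule fJ)
    hence "blinfun_apply f x' = blinfun_apply f x" by (simp add: blinfun.diff_right)
    thus ?thesis unfolding g0_def x'_def by simp
  qed
  have bnd: "\<bar>blinfun_apply f x\<bar> \<le> norm f * infdist x J" for x
  proof (cases "norm f = 0")
    case True
    hence "f = 0" by simp
    thus ?thesis by simp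
  next
    case False
    hence nfp: "norm f > 0" by simp
    have "\<bar>blinfun_apply f x\<bar> / norm f \<le> infdist x J"
    proof (rule infdist_ge[OF Jne])
      fix j assume "j \<in> J"
      hence "blinfun_apply f x = blinfun_apply f (x - j)" using fJ by (simp add: blinfun.diff_right)
      also have "\<bar>\<dots>\<bar> \<le> norm f * norm (x - j)" by (metis norm_blinfun real_norm_def)
      finally show "\<bar>blinfun_apply f x\<bar> / norm f \<le> dist x j" using nfp
        by (simp add: divide_le_eq dist_norm mult.commute)
    qed
    thus ?thesis using nfp by (simp add: divide_le_eq mult.commute)
  qed
  have bl: "bounded_linear g0"
  proof (rule bounded_linear_intro[where K="norm f"])
    fix q r :: 's and c :: real
    obtain x y where xy: "\<pi> x = q" "\<pi> y = r" using sel by metis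
    show "g0 (q + r) = g0 q + g0 r"
      using g0[of "x + y"] g0[of x] g0[of y] bq_parts(1)[OF \<pi>] xy by (simp add: blinfun.add_right)
    show "g0 (c *\<^sub>R q) = c *\<^sub>R g0 q"
      using g0[of "c *\<^sub>R x"] g0[of x] bq_parts(2)[OF \<pi>] xy by (simp add: blinfun.scaleR_right)
    show "norm (g0 q) \<le> norm q * norm f"
      using g0[of x] bnd[of x] bq_parts(4)[OF \<pi>, of x] xy by (simp add: mult.commute)
  qed
  show ?thesis
    by (rule exI[of _ "Blinfun g0"]) (simp add: bounded_linear_Blinfun_apply[OF bl] g0)
qed

lemma bidual_surj:
  fixes J :: "'b::banach set" and \<pi> :: "'b \<Rightarrow> 's::banach"
  assumes J: "subspace J" "closed J" and \<pi>: "banach_quotient \<pi> UNIV J"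
    and refl: "reflexive_space TYPE('s)"
  shows "\<exists>x. \<phi> - canon x \<in> biannihilator J"
proof -
  have \<pi>bl: "bounded_linear \<pi>" using bq_UNIV(1)[OF \<pi> J(1)] .
  define Pb where "Pb = Blinfun \<pi>"
  have Pb: "blinfun_apply Pb = \<pi>" unfolding Pb_def by (rule bounded_linear_Blinfun_apply[OF \<pi>bl])
  define \<psi> where "\<psi> g = blinfun_apply \<phi> (g o\<^sub>L Pb)" for g :: "'s \<Rightarrow>\<^sub>L real"
  have \<psi>bl: "bounded_linear \<psi>" unfolding \<psi>_def
    by (rule bounded_linear_compose[OF blinfun.bounded_linear_right bounded_bilinear.bounded_linear_left[OF bounded_bilinear_blinfun_compose]])
  have "surj (canon :: 's \<Rightarrow> _)" using refl unfolding reflexive_space_def .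
  then obtain q :: 's where q: "canon q = Blinfun \<psi>" by (metis surjD)
  obtain x where x: "\<pi> x = q" using bq_parts(3)[OF \<pi>] by (metis UNIV_I imageE)
  have "blinfun_apply \<phi> f = blinfun_apply f x" if f: "f \<in> annihilator J" for f
  proof -
    obtain g :: "'s \<Rightarrow>\<^sub>L real" where g: "\<forall>x. blinfun_apply g (\<pi> x) = blinfun_apply f x"
      using factor_quot[OF J \<pi> f] by blast
    have fg: "f = g o\<^sub>L Pb" by (rule blinfun_eqI) (simp add: Pb g)
    have "blinfun_apply \<phi> f = \<psi> g" unfolding \<psi>_def fg ..
    also have "\<dots> = blinfun_apply (canon q) g" using q by (simp add: bounded_linear_Blinfun_apply[OF \<psi>bl])
    also have "\<dots> = blinfun_apply g (\<pi> x)" using x by simp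
    also have "\<dots> = blinfun_apply f x" using g by simp
    finally show ?thesis .
  qed
  hence "\<phi> - canon x \<in> biannihilator J"
    by (simp add: biannihilator_def blinfun.diff_left)
  thus ?thesis by blast
qed

lemma part2:
  fixes J :: "'b::banach set" and \<pi> :: "'b \<Rightarrow> 's::banach"
    and \<rho> :: "(('b \<Rightarrow>\<^sub>L real) \<Rightarrow>\<^sub>L real) \<Rightarrow> 't::banach"
  assumes J: "subspace J" "closed J" and \<pi>: "banach_quotient \<pi> UNIV J"
    and refl: "reflexive_space TYPE('s)"
    and \<rho>: "banach_quotient \<rho> UNIV (biannihilator J)"
    and c: "cqlp TYPE('z::banach) \<pi> UNIV J"
  shows "cqlp TYPE('z) \<rho> UNIV (biannihilator J)"
proof -
  define K where "K = biannihilator J"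
  have \<rho>': "banach_quotient \<rho> UNIV K" using \<rho> K_def by simp
  have nrc: "norm (\<rho> (canon x)) = norm (\<pi> x)" for x
    using bq_parts(4)[OF \<rho>', of "canon x"] bq_parts(4)[OF \<pi>, of x] infdist_canon_biann[OF J(1), of x]
    unfolding K_def by simp
  have rcd: "\<rho> (canon (x - x')) = \<rho> (canon x) - \<rho> (canon x')" for x x'
    using bq_diff[OF \<rho>' subspace_UNIV] by (simp add: canon_diff)
  have sel: "\<exists>x. \<rho> (canon x) = t" for t
  proof -
    obtain \<phi> where t: "\<rho> \<phi> = t" using bq_parts(3)[OF \<rho>'] by (metis UNIV_I imageE)
    obtain x where x: "\<phi> - canon x \<in> K" using bidual_surj[OF J \<pi> refl] K_def by blast
    have "norm (\<rho> (\<phi> - canon x)) = 0" using bq_parts(4)[OF \<rho>', of "\<phi> - canon x"] x by simp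
    hence "\<rho> \<phi> = \<rho> (canon x)" using bq_diff[OF \<rho>' subspace_UNIV] by simp
    thus ?thesis using t by metis
  qed
  define \<kappa> where "\<kappa> t = \<pi> (SOME x. \<rho> (canon x) = t)" for t
  have \<kappa>\<rho>: "\<kappa> (\<rho> (canon x)) = \<pi> x" for x
  proof -
    define x' where "x' = (SOME x'. \<rho> (canon x') = \<rho> (canon x))"
    have x': "\<rho> (canon x') = \<rho> (canon x)" unfolding x'_def using someI_ex[OF sel[of "\<rho> (canon x)"]] by auto
    have "\<rho> (canon (x' - x)) = 0" using rcd x' by simp
    hence "\<pi> (x' - x) = 0" using nrc[of "x' - x"] by simp
    hence "\<pi> x' = \<pi> x" using bq_diff[OF \<pi> subspace_UNIV] by simp
    thus ?thesis unfolding \<kappa>_def x'_def by simp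
  qed
  have nrm: "norm (\<kappa> t) = norm t" for t
    using sel[of t] \<kappa>\<rho> nrc by metis
  have add: "\<kappa> (r + s) = \<kappa> r + \<kappa> s" for r s
  proof -
    obtain y y' where y: "\<rho> (canon y) = r" "\<rho> (canon y') = s" using sel by metis
    have "r + s = \<rho> (canon (y + y'))" using bq_parts(1)[OF \<rho>'] y by (simp add: canon_add)
    hence "\<kappa> (r + s) = \<pi> (y + y')" using \<kappa>\<rho> by simp
    also have "\<dots> = \<pi> y + \<pi> y'" using bq_parts(1)[OF \<pi>] by simp
    finally show ?thesis using \<kappa>\<rho>[of y] \<kappa>\<rho>[of y'] y by simp
  qed
  have scl: "\<kappa> (a *\<^sub>R r) = a *\<^sub>R \<kappa> r" for a r
  proof -
    obtain y where y: "\<rho> (canon y) = r" using sel by metis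
    have "a *\<^sub>R r = \<rho> (canon (a *\<^sub>R y))" using bq_parts(2)[OF \<rho>'] y by (simp add: canon_scale)
    hence "\<kappa> (a *\<^sub>R r) = \<pi> (a *\<^sub>R y)" using \<kappa>\<rho> by simp
    also have "\<dots> = a *\<^sub>R \<pi> y" using bq_parts(2)[OF \<pi>] by simp
    finally show ?thesis using \<kappa>\<rho>[of y] y by simp
  qed
  have bl: "bounded_linear \<kappa>" using iso_lin(1)[of \<kappa>, OF add scl nrm] .
  show ?thesis unfolding cqlp_def
  proof (intro allI impI)
    fix T :: "'z \<Rightarrow> 't" assume T: "compact_op T"
    have T': "compact_op (\<kappa> \<circ> T)" by (rule compact_op_comp[OF T bl])
    have oT: "onorm (\<kappa> \<circ> T) = onorm T" by (rule onorm_eq_norm) (simp add: nrm)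
    obtain S' :: "'z \<Rightarrow> 'b" where S': "compact_op S'" "\<forall>z. \<pi> (S' z) = (\<kappa> \<circ> T) z" "onorm S' = onorm (\<kappa> \<circ> T)"
      using c T' unfolding cqlp_def by blast
    define S where "S = canon \<circ> S'"
    have cS: "compact_op S" unfolding S_def by (rule compact_op_comp[OF S'(1) canon_bl])
    have rS: "\<rho> (S z) = T z" for z
    proof -
      obtain x where x: "\<rho> (canon x) = T z" using sel by blast
      have "\<pi> (S' z) = \<pi> x" using S'(2) \<kappa>\<rho>[of x] x by simp
      hence "\<pi> (S' z - x) = 0" using bq_diff[OF \<pi> subspace_UNIV] by simp
      hence "\<rho> (canon (S' z - x)) = 0" using nrc[of "S' z - x"] by simp
      hence "\<rho> (canon (S' z)) = \<rho> (canon x)" using rcd by simp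
      thus ?thesis using x S_def by simp
    qed
    have "onorm S = onorm S'" unfolding S_def by (rule onorm_eq_norm) (simp add: norm_canon)
    thus "\<exists>S :: 'z \<Rightarrow> _. compact_op S \<and> range S \<subseteq> UNIV \<and> (\<forall>z. \<rho> (S z) = T z) \<and> onorm S = onorm T"
      using cS rS S'(3) oT by (intro exI[of _ S]) simp
  qed
qed


theorem proposition4:
  shows
  "(\<forall>(J :: 'a::banach set) (Y :: 'a set) (\<pi> :: 'a \<Rightarrow> 'q::banach) (\<rho> :: 'a \<Rightarrow> 'r::banach).
      subspace J \<and> closed J \<and> subspace Y \<and> closed Y \<and> J \<subseteq> Y \<and>
      banach_quotient \<pi> UNIV J \<and> banach_quotient \<rho> Y J \<and> cqlp TYPE('z::banach) \<pi> UNIV J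
      \<longrightarrow> cqlp TYPE('z) \<rho> Y J)
 \<and> (\<forall>(J :: 'b::banach set) (\<pi> :: 'b \<Rightarrow> 's::banach)
       (\<rho> :: (('b \<Rightarrow>\<^sub>L real) \<Rightarrow>\<^sub>L real) \<Rightarrow> 't::banach).
      subspace J \<and> closed J \<and> banach_quotient \<pi> UNIV J \<and> reflexive_space TYPE('s) \<and>
      banach_quotient \<rho> UNIV (biannihilator J) \<and> cqlp TYPE('z) \<pi> UNIV J
      \<longrightarrow> cqlp TYPE('z) \<rho> UNIV (biannihilator J))
 \<and> (\<forall>(J :: 'c::banach set) (e :: 'j::banach \<Rightarrow> 'c) (\<pi> :: 'c \<Rightarrow> 'u::banach)
       (\<rho> :: (('c \<Rightarrow>\<^sub>L real) \<Rightarrow>\<^sub>L real) \<Rightarrow> 'v::banach).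
      subspace J \<and> closed J \<and>
      bounded_linear e \<and> (\<forall>x. norm (e x) = norm x) \<and> range e = J \<and> reflexive_space TYPE('j) \<and>
      banach_quotient \<pi> UNIV J \<and>
      banach_quotient \<rho> UNIV (canon ` J) \<and> cqlp TYPE('z) \<rho> UNIV (canon ` J)
      \<longrightarrow> cqlp TYPE('z) \<pi> UNIV J)"
proof (intro conjI allI impI)
  fix J Y :: "'a::banach set" and \<pi> :: "'a \<Rightarrow> 'q::banach" and \<rho> :: "'a \<Rightarrow> 'r::banach"
  assume "subspace J \<and> closed J \<and> subspace Y \<and> closed Y \<and> J \<subseteq> Y \<and>
      banach_quotient \<pi> UNIV J \<and> banach_quotient \<rho> Y J \<and> cqlp TYPE('z::banach) \<pi> UNIV J"
  thus "cqlp TYPE('z) \<rho> Y J" using part1 by blast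
next
  fix J :: "'b::banach set" and \<pi> :: "'b \<Rightarrow> 's::banach"
       and \<rho> :: "(('b \<Rightarrow>\<^sub>L real) \<Rightarrow>\<^sub>L real) \<Rightarrow> 't::banach"
  assume "subspace J \<and> closed J \<and> banach_quotient \<pi> UNIV J \<and> reflexive_space TYPE('s) \<and>
      banach_quotient \<rho> UNIV (biannihilator J) \<and> cqlp TYPE('z) \<pi> UNIV J"
  thus "cqlp TYPE('z) \<rho> UNIV (biannihilator J)" using part2 by blast
next
  fix J :: "'c::banach set" and e :: "'j::banach \<Rightarrow> 'c" and \<pi> :: "'c \<Rightarrow> 'u::banach"
       and \<rho> :: "(('c \<Rightarrow>\<^sub>L real) \<Rightarrow>\<^sub>L real) \<Rightarrow> 'v::banach"
  assume "subspace J \<and> closed J \<and>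
      bounded_linear e \<and> (\<forall>x. norm (e x) = norm x) \<and> range e = J \<and> reflexive_space TYPE('j) \<and>
      banach_quotient \<pi> UNIV J \<and>
      banach_quotient \<rho> UNIV (canon ` J) \<and> cqlp TYPE('z) \<rho> UNIV (canon ` J)"
  thus "cqlp TYPE('z) \<pi> UNIV J" using part3 by blast
qed

end
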